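(* Let $R$ be a discrete valuation domain with maximal ideal $P$. Then the injective hull $E(R/P)$ of $R/P$ and the field of fractions $Q(R)$ of $R$ are not pseudo-absorbing primary multiplication $R$-modules. Moreover, the cyclic $R$-modules $R$ and $R/P^n$ (for every integer $n\ge1$) are pseudo-absorbing primary multiplication $R$-modules.
   Context: A proper ideal $I$ of $R$ is 2-absorbing primary if whenever $a,b,c\in R$ and $abc\in I$ then $ab\in I$ or $ac\in\sqrt I$ or $bc\in\sqrt I$. A proper submodule $N$ of an $R$-module $M$ is pseudo-absorbing primary if $(N:_RM)=\{r\in R:rM\subseteq N\}$ is a 2-absorbing primary ideal. $M$ is a pseudo-absorbing primary multiplication module if for every pseudo-absorbing primary submodule $N$ of $M$ there is an ideal $I$ of $R$ with $N=IM$. *)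

theory Defs
  imports Complex_Main "HOL-Computational_Algebra.Fraction_Field"
begin

definition is_ideal :: "'a::comm_ring_1 set \<Rightarrow> bool" where
  "is_ideal I \<longleftrightarrow> 0 \<in> I \<and> (\<forall>x\<in>I. \<forall>y\<in>I. x + y \<in> I) \<and> (\<forall>r. \<forall>x\<in>I. r * x \<in> I)"

definition principal_ideal :: "'a::comm_ring_1 set \<Rightarrow> bool" where
  "principal_ideal I \<longleftrightarrow> (\<exists>a. I = {a * r | r. True})"

definition maximal_ideal :: "'a::comm_ring_1 set \<Rightarrow> bool" where
  "maximal_ideal P \<longleftrightarrow> is_ideal P \<and> P \<noteq> UNIV \<and>
     (\<forall>J. is_ideal J \<and> P \<subseteq> J \<longrightarrow> J = P \<or> J = UNIV)"

text \<open>Discrete valuation ring: a principal ideal domain which is local (exactly one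
  maximal ideal) and not a field (its maximal ideal is nonzero).\<close>
definition is_dvr :: "'a::idom itself \<Rightarrow> bool" where
  "is_dvr _ \<longleftrightarrow> (\<forall>I::'a set. is_ideal I \<longrightarrow> principal_ideal I) \<and>
     (\<exists>!P::'a set. maximal_ideal P) \<and> (\<forall>P::'a set. maximal_ideal P \<longrightarrow> P \<noteq> {0})"

definition radical :: "'a::comm_ring_1 set \<Rightarrow> 'a set" where
  "radical I = {r. \<exists>n. r ^ n \<in> I}"

definition two_absorbing_primary :: "'a::comm_ring_1 set \<Rightarrow> bool" where
  "two_absorbing_primary I \<longleftrightarrow> is_ideal I \<and> I \<noteq> UNIV \<and>
     (\<forall>a b c. a * b * c \<in> I \<longrightarrow> a * b \<in> I \<or> a * c \<in> radical I \<or> b * c \<in> radical I)"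

definition colon :: "('a::comm_ring_1 \<Rightarrow> 'b::ab_group_add \<Rightarrow> 'b) \<Rightarrow> 'b set \<Rightarrow> 'a set" where
  "colon scale N = {r. \<forall>m. scale r m \<in> N}"

definition pseudo_absorbing_primary ::
    "('a::comm_ring_1 \<Rightarrow> 'b::ab_group_add \<Rightarrow> 'b) \<Rightarrow> 'b set \<Rightarrow> bool" where
  "pseudo_absorbing_primary scale N \<longleftrightarrow> module.subspace scale N \<and> N \<noteq> UNIV \<and>
     two_absorbing_primary (colon scale N)"

definition ideal_smult ::
    "('a::comm_ring_1 \<Rightarrow> 'b::ab_group_add \<Rightarrow> 'b) \<Rightarrow> 'a set \<Rightarrow> 'b set" where
  "ideal_smult scale I = module.span scale {scale r m | r m. r \<in> I}"

definition pap_multiplication_module :: "('a::comm_ring_1 \<Rightarrow> 'b::ab_group_add \<Rightarrow> 'b) \<Rightarrow> bool" where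
  "pap_multiplication_module scale \<longleftrightarrow>
     (\<forall>N. pseudo_absorbing_primary scale N \<longrightarrow> (\<exists>I. is_ideal I \<and> N = ideal_smult scale I))"

fun ideal_pow :: "'a::comm_ring_1 set \<Rightarrow> nat \<Rightarrow> 'a set" where
  "ideal_pow P 0 = UNIV"
| "ideal_pow P (Suc n) = module.span (*) {a * b | a b. a \<in> P \<and> b \<in> ideal_pow P n}"

text \<open>M is isomorphic to R/I: M is cyclic, generated by some m whose annihilator is I.\<close>
definition iso_to_quotient :: "('a::comm_ring_1 \<Rightarrow> 'b::ab_group_add \<Rightarrow> 'b) \<Rightarrow> 'a set \<Rightarrow> bool" where
  "iso_to_quotient scale I \<longleftrightarrow> (\<exists>m. (\<forall>x. \<exists>r. x = scale r m) \<and> {r. scale r m = 0} = I)"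

text \<open>Injectivity of a module, via Baer's criterion: every R-linear map from an ideal of R
  into M extends to R.\<close>
definition injective_module :: "('a::comm_ring_1 \<Rightarrow> 'b::ab_group_add \<Rightarrow> 'b) \<Rightarrow> bool" where
  "injective_module scale \<longleftrightarrow>
     (\<forall>I (f :: 'a \<Rightarrow> 'b). is_ideal I \<and> (\<forall>a\<in>I. \<forall>b\<in>I. f (a + b) = f a + f b) \<and>
        (\<forall>r. \<forall>a\<in>I. f (r * a) = scale r (f a)) \<longrightarrow> (\<exists>e. \<forall>a\<in>I. f a = scale a e))"

text \<open>M is an injective hull of R/P: M is injective and contains a submodule R e isomorphic
  to R/P (annihilator of e equals P) which is essential in M.\<close>
definition injective_hull_of_quotient ::
    "('a::comm_ring_1 \<Rightarrow> 'b::ab_group_add \<Rightarrow> 'b) \<Rightarrow> 'a set \<Rightarrow> bool" where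
  "injective_hull_of_quotient scale P \<longleftrightarrow> injective_module scale \<and>
     (\<exists>e. {r. scale r e = 0} = P \<and>
        (\<forall>N. module.subspace scale N \<and> N \<noteq> {0} \<longrightarrow> (\<exists>x\<in>N. x \<noteq> 0 \<and> (\<exists>r. x = scale r e))))"

definition fract_scale :: "'a::idom \<Rightarrow> 'a fract \<Rightarrow> 'a fract" where
  "fract_scale r q = Fract r 1 * q"

end

theory Submission
  imports Defs
begin

lemma two_abs_zero: "two_absorbing_primary ({0} :: 'a::idom set)"
proof -
  have r: "radical ({0}::'a set) = {0}"
    by (auto simp: radical_def)
  show ?thesis
    unfolding two_absorbing_primary_def is_ideal_def r
    by (auto, metis UNIV_I singletonD zero_neq_one)
qed

lemma not_pap:
  fixes scale :: "'a::idom \<Rightarrow> 'b::ab_group_add \<Rightarrow> 'b"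
  assumes M: "module scale" and sub: "module.subspace scale N" and NU: "N \<noteq> UNIV"
    and x0: "x0 \<in> N" "x0 \<noteq> 0"
    and div: "\<And>a y. a \<noteq> 0 \<Longrightarrow> \<exists>z. y = scale a z"
  shows "\<not> pap_multiplication_module scale"
proof
  assume pap: "pap_multiplication_module scale"
  interpret module scale by (rule M)
  obtain x where x: "x \<notin> N" using NU by auto
  have col: "colon scale N = {0}"
  proof (intro set_eqI iffI)
    fix r assume "r \<in> colon scale N"
    hence r: "\<forall>m. scale r m \<in> N" by (simp add: colon_def)
    show "r \<in> {0}"
    proof (rule ccontr)
      assume "r \<notin> {0}"
      then obtain z where "x = scale r z" using div by blast
      with r x show False by auto
    qed
  next
    fix r assume "r \<in> ({0}::'a set)"
    thus "r \<in> colon scale N" using sub by (simp add: colon_def subspace_0)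
  qed
  have pap_N: "pseudo_absorbing_primary scale N"
    unfolding pseudo_absorbing_primary_def col using sub NU two_abs_zero by auto
  then obtain I where I: "is_ideal I" and NI: "N = ideal_smult scale I"
    using pap unfolding pap_multiplication_module_def by blast
  show False
  proof (cases "\<exists>a\<in>I. a \<noteq> 0")
    case True
    then obtain a where a: "a \<in> I" "a \<noteq> 0" by blast
    obtain z where "x = scale a z" using div a(2) by blast
    hence "x \<in> {scale r m | r m. r \<in> I}" using a by blast
    hence "x \<in> ideal_smult scale I" unfolding ideal_smult_def by (rule span_base)
    with x NI show False by simp
  next
    case False
    hence "{scale r m | r m. r \<in> I} \<subseteq> {0}" by auto
    moreover have "subspace {0}" by (simp add: subspace_def)
    ultimately have "ideal_smult scale I \<subseteq> {0}" unfolding ideal_smult_def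
      by (rule span_minimal)
    with x0 NI show False by auto
  qed
qed

lemma cyclic_pap:
  fixes scale :: "'a::comm_ring_1 \<Rightarrow> 'b::ab_group_add \<Rightarrow> 'b"
  assumes M: "module scale" and gen: "\<forall>x. \<exists>r. x = scale r m"
  shows "pap_multiplication_module scale"
  unfolding pap_multiplication_module_def
proof (intro allI impI)
  interpret module scale by (rule M)
  fix N assume "pseudo_absorbing_primary scale N"
  hence sub: "subspace N" by (simp add: pseudo_absorbing_primary_def)
  define I where "I = {r. scale r m \<in> N}"
  have "is_ideal I"
    unfolding is_ideal_def I_def using sub
    by (auto simp: subspace_0 subspace_add scale_left_distrib subspace_scale
        simp flip: scale_scale)
  moreover have "N = ideal_smult scale I"
  proof
    show "N \<subseteq> ideal_smult scale I"
    proof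
      fix x assume "x \<in> N"
      obtain r where r: "x = scale r m" using gen by blast
      have "x = scale r (scale 1 m)" using r by simp
      moreover have "r \<in> I" using \<open>x \<in> N\<close> r by (simp add: I_def)
      ultimately have "x \<in> {scale r m | r m. r \<in> I}" by blast
      thus "x \<in> ideal_smult scale I" unfolding ideal_smult_def by (rule span_base)
    qed
  next
    have "{scale r y | r y. r \<in> I} \<subseteq> N"
    proof clarify
      fix r y assume "r \<in> I"
      obtain s where "y = scale s m" using gen by blast
      hence eq: "scale r y = scale s (scale r m)" by (simp add: mult.commute)
      have "scale r m \<in> N" using \<open>r \<in> I\<close> by (simp add: I_def)
      hence "scale s (scale r m) \<in> N" using sub by (rule subspace_scale[rotated])
      thus "scale r y \<in> N" using eq by simp
    qed
    thus "ideal_smult scale I \<subseteq> N" unfolding ideal_smult_def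
      by (rule span_minimal) (rule sub)
  qed
  ultimately show "\<exists>I. is_ideal I \<and> N = ideal_smult scale I" by blast
qed

lemma inj_div:
  fixes scale :: "'a::idom \<Rightarrow> 'b::ab_group_add \<Rightarrow> 'b"
  assumes M: "module scale" and inj: "injective_module scale" and a: "a \<noteq> 0"
  shows "\<exists>z. y = scale a z"
proof -
  interpret module scale by (rule M)
  define I where "I = {r * a | r. True}"
  define f where "f x = scale (SOME r. x = r * a) y" for x
  have fr: "f (r * a) = scale r y" for r
  proof -
    have "\<exists>r'. r * a = r' * a" by blast
    hence "r * a = (SOME r'. r * a = r' * a) * a" by (rule someI_ex)
    hence "(SOME r'. r * a = r' * a) = r" using a by simp
    thus ?thesis by (simp add: f_def)
  qed
  have "is_ideal I" unfolding is_ideal_def I_def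
  proof (intro conjI ballI allI)
    show "0 \<in> {r * a |r. True}" by (rule CollectI, rule exI[of _ 0]) simp
  next
    fix u v assume "u \<in> {r * a |r. True}" "v \<in> {r * a |r. True}"
    then obtain r s where "u = r * a" "v = s * a" by blast
    hence "u + v = (r + s) * a" by (simp add: distrib_right)
    thus "u + v \<in> {r * a |r. True}" by blast
  next
    fix t u assume "u \<in> {r * a |r. True}"
    then obtain r where "u = r * a" by blast
    hence "t * u = (t * r) * a" by (simp add: mult.assoc)
    thus "t * u \<in> {r * a |r. True}" by blast
  qed
  moreover have "\<forall>u\<in>I. \<forall>v\<in>I. f (u + v) = f u + f v"
    unfolding I_def by (auto simp flip: distrib_right simp: fr scale_left_distrib)
  moreover have "\<forall>t. \<forall>u\<in>I. f (t * u) = scale t (f u)"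
    unfolding I_def by (auto simp: fr simp flip: mult.assoc)
  ultimately obtain e where "\<forall>u\<in>I. f u = scale u e"
    using inj unfolding injective_module_def by blast
  moreover have "1 * a \<in> I" by (auto simp: I_def)
  ultimately have "f (1 * a) = scale (1 * a) e" by blast
  hence "y = scale a e" using fr[of 1] by simp
  thus ?thesis by blast
qed

lemma fract_add1: "Fract (a + b) 1 = Fract a 1 + Fract (b::'a::idom) 1"
  by simp

lemma module_fract: "module (fract_scale :: 'a::idom \<Rightarrow> 'a fract \<Rightarrow> 'a fract)"
proof
  fix a b :: 'a and x y :: "'a fract"
  show "fract_scale a (x + y) = fract_scale a x + fract_scale a y"
    by (simp add: fract_scale_def distrib_left)
  show "fract_scale (a + b) x = fract_scale a x + fract_scale b x"
    unfolding fract_scale_def fract_add1 by (rule distrib_right)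
  show "fract_scale a (fract_scale b x) = fract_scale (a * b) x"
    by (simp add: fract_scale_def mult.assoc[symmetric])
  show "fract_scale 1 x = x"
    by (simp add: fract_scale_def One_fract_def[symmetric])
qed

lemma module_mult: "module ((*) :: 'a::comm_ring_1 \<Rightarrow> 'a \<Rightarrow> 'a)"
  by unfold_locales (auto simp: algebra_simps)

theorem proposition2p5:
  fixes P :: "'a::idom set"
  assumes "is_dvr TYPE('a)" and "maximal_ideal P"
  shows "(\<forall>scale :: 'a \<Rightarrow> 'b::ab_group_add \<Rightarrow> 'b.
            module scale \<and> injective_hull_of_quotient scale P
              \<longrightarrow> \<not> pap_multiplication_module scale)
       \<and> \<not> pap_multiplication_module (fract_scale :: 'a \<Rightarrow> 'a fract \<Rightarrow> 'a fract)
       \<and> pap_multiplication_module ((*) :: 'a \<Rightarrow> 'a \<Rightarrow> 'a)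
       \<and> (\<forall>n::nat. n \<ge> 1 \<longrightarrow> (\<forall>scale :: 'a \<Rightarrow> 'c::ab_group_add \<Rightarrow> 'c.
            module scale \<and> iso_to_quotient scale (ideal_pow P n)
              \<longrightarrow> pap_multiplication_module scale))"
proof (intro conjI allI impI)
  have idP: "is_ideal P" and PU: "P \<noteq> UNIV" using assms(2) by (auto simp: maximal_ideal_def)
  have P0: "P \<noteq> {0}" using assms unfolding is_dvr_def by blast
  have one: "1 \<notin> P"
  proof
    assume "1 \<in> P"
    hence "r * 1 \<in> P" for r using idP unfolding is_ideal_def by blast
    thus False using PU by auto
  qed
  obtain p where p: "p \<in> P" "p \<noteq> 0" using P0 idP by (auto simp: is_ideal_def)
  have pmul: "r * p \<in> P" for r using p idP by (simp add: is_ideal_def)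
  {
    fix scale :: "'a \<Rightarrow> 'b::ab_group_add \<Rightarrow> 'b"
    assume h: "module scale \<and> injective_hull_of_quotient scale P"
    hence M: "module scale" and inj: "injective_module scale"
      by (auto simp: injective_hull_of_quotient_def)
    interpret module scale by (rule M)
    obtain e where e: "{r. scale r e = 0} = P"
      using h by (auto simp: injective_hull_of_quotient_def)
    define N where "N = {scale r e | r. True}"
    have sub: "subspace N" unfolding N_def
    proof (rule subspaceI)
      show "0 \<in> {scale r e |r. True}" by (rule CollectI, rule exI[of _ 0]) simp
    next
      fix u v assume "u \<in> {scale r e |r. True}" "v \<in> {scale r e |r. True}"
      then obtain r s where "u = scale r e" "v = scale s e" by blast
      hence "u + v = scale (r + s) e" by (simp add: scale_left_distrib)
      thus "u + v \<in> {scale r e |r. True}" by blast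
    next
      fix t u assume "u \<in> {scale r e |r. True}"
      then obtain r where "u = scale r e" by blast
      hence "scale t u = scale (t * r) e" by simp
      thus "scale t u \<in> {scale r e |r. True}" by blast
    qed
    have e0: "e \<noteq> 0" using e one by auto
    have eN: "e \<in> N" unfolding N_def by (rule CollectI, rule exI[of _ 1]) simp
    obtain x where x: "e = scale p x" using inj_div[OF M inj p(2)] by blast
    have "x \<notin> N"
    proof
      assume "x \<in> N"
      then obtain s where xs: "x = scale s e" by (auto simp: N_def)
      have pe: "scale p (scale s e) = e" by (simp only: xs[symmetric] x[symmetric])
      have "scale (p * s - 1) e = scale p (scale s e) - e"
        by (simp only: scale_left_diff_distrib scale_scale scale_one)
      hence "scale (p * s - 1) e = 0" by (simp only: pe diff_self)
      hence "p * s - 1 \<in> P" using e by auto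
      moreover have "p * s \<in> P" using pmul[of s] by (simp add: mult.commute)
      ultimately have "p * s - (p * s - 1) \<in> P" using idP
        by (metis (no_types, lifting) diff_conv_add_uminus is_ideal_def minus_diff_eq
            mult_minus1 add_diff_cancel_left')
      thus False using one by simp
    qed
    hence "N \<noteq> UNIV" by auto
    from not_pap[OF M sub this eN e0 inj_div[OF M inj]]
    show "\<not> pap_multiplication_module scale" .
  }
  {
    interpret module "fract_scale :: 'a \<Rightarrow> 'a fract \<Rightarrow> 'a fract" by (rule module_fract)
    define N :: "'a fract set" where "N = {Fract r 1 | r. True}"
    have sub: "subspace N" unfolding N_def
    proof (rule subspaceI)
      show "0 \<in> {Fract r 1 |r::'a. True}" by (rule CollectI, rule exI[of _ 0]) (simp add: Zero_fract_def)
    next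
      fix u v :: "'a fract" assume "u \<in> {Fract r 1 |r. True}" "v \<in> {Fract r 1 |r. True}"
      then obtain r s where "u = Fract r 1" "v = Fract s 1" by blast
      hence "u + v = Fract (r + s) 1" by simp
      thus "u + v \<in> {Fract r 1 |r. True}" by blast
    next
      fix t :: 'a and u :: "'a fract" assume "u \<in> {Fract r 1 |r. True}"
      then obtain r where "u = Fract r 1" by blast
      hence "fract_scale t u = Fract (t * r) 1" by (simp add: fract_scale_def)
      thus "fract_scale t u \<in> {Fract r 1 |r. True}" by blast
    qed
    have oneN: "(1::'a fract) \<in> N" by (auto simp: N_def One_fract_def)
    have "Fract 1 p \<notin> N"
    proof
      assume "Fract 1 p \<in> N"
      then obtain r where "Fract 1 p = Fract r 1" by (auto simp: N_def)
      hence "1 = r * p" using p(2) by (simp add: eq_fract)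
      thus False using pmul[of r] one by simp
    qed
    hence NU: "N \<noteq> UNIV" by auto
    have dv: "\<exists>z. y = fract_scale a z" if "a \<noteq> 0" for a y
    proof -
      have "Fract a 1 \<noteq> 0" using that by (simp add: Zero_fract_def eq_fract)
      hence "y = Fract a 1 * (y / Fract a 1)" by simp
      hence "y = fract_scale a (y / Fract a 1)" by (simp only: fract_scale_def)
      thus ?thesis by blast
    qed
    show "\<not> pap_multiplication_module (fract_scale :: 'a \<Rightarrow> 'a fract \<Rightarrow> 'a fract)"
      by (rule not_pap[OF module_fract sub NU oneN one_neq_zero dv])
  }
  show "pap_multiplication_module ((*) :: 'a \<Rightarrow> 'a \<Rightarrow> 'a)"
    by (rule cyclic_pap[OF module_mult, of 1]) simp
  fix n :: nat and scale :: "'a \<Rightarrow> 'c::ab_group_add \<Rightarrow> 'c"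
  assume "module scale \<and> iso_to_quotient scale (ideal_pow P n)"
  then obtain m where "module scale" "\<forall>x. \<exists>r. x = scale r m"
    by (auto simp: iso_to_quotient_def)
  thus "pap_multiplication_module scale" by (rule cyclic_pap)
qed

end
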